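(* In the sigmoid setting with algorithm RCDB-S described in the context, suppose the events $\mathcal E_1=\{\|\theta^*-\theta_t\|_{\Sigma_t}\le\beta_t\ \forall t\}$ and $\mathcal E_2=\{\|\theta^*-\theta_t\|_{\Lambda_t}\le\tilde\beta_t\ \forall t\}$ hold. Then for every $t\in[T]$: (i) $v_t\le\dot\sigma\big((\phi(x_t,a_t)-\phi(x_t,b_t))^\top\theta^*\big)$; and (ii) the per-round regret satisfies $$2r^*(x_t,a_t^* )-r^*(x_t,a_t)-r^*(x_t,b_t)\le2\tilde\beta_t\|\phi(x_t,a_t)-\phi(x_t,b_t)\|_{\Lambda_t^{-1}}.$$
   Context: Sigmoid setting. Context set $\mathcal X$, action set $\mathcal A$, known feature map $\phi:\mathcal X\times\mathcal A\to\mathbb R^d$ with $\|\phi(x,a)\|_2\le1$; unknown $\theta^*$ with $\|\theta^*\|_2\le B$; reward $r^*(x,a)=\langle\theta^*,\phi(x,a)\rangle$; $a_t^*=\arg\max_a r^*(x_t,a)$. Link function $\sigma(z)=1/(1+e^{-z})$, $\dot\sigma(z)=e^{-z}/(1+e^{-z})^2$, and $\kappa>0$ is a constant with $\dot\sigma(\langle\phi(x,a)-\phi(x,b),\theta\rangle)\ge\kappa$ for all $x,a,b$ and $\|\theta\|_2\le B$. In each round $t$: context $x_t$ revealed, agent picks $a_t,b_t$; a true label $l_t\in\{0,1\}$ with $\Pr(l_t=1\mid\text{past},x_t,a_t,b_t)=\sigma(\langle\phi(x_t,a_t)-\phi(x_t,b_t),\theta^*\rangle)$; an adversary seeing $x_t,a_t,b_t,l_t$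 chooses $c_t\in\{0,1\}$; agent observes $o_t=l_t$ if $c_t=0$, $o_t=1-l_t$ if $c_t=1$. Notation $\phi_i=\phi(x_i,a_i)-\phi(x_i,b_i)$, $\|v\|_M=\sqrt{v^\top Mv}$. Algorithm RCDB-S (parameters $\alpha>0$, $\lambda>0$, $\kappa$, positive radii $\beta_t,\tilde\beta_t$): for $t=1,\dots,T$: (1) $\Sigma_t=\lambda I+\sum_{i=1}^{t-1}w_i\kappa\,\phi_i\phi_i^\top$ and $\Lambda_t=\lambda I+\sum_{i=1}^{t-1}w_iv_i\,\phi_i\phi_i^\top$; (2) $\theta_t$ solves $\lambda\theta+\sum_{i=1}^{t-1}w_i(\sigma(\phi_i^\top\theta)-o_i)\phi_i=0$; (3) observe $x_t$, choose $(a_t,b_t)\in\arg\max_{a,b}\{(\phi(x_t,a)+\phi(x_t,b))^\top\theta_t+\tilde\beta_t\|\phi(x_t,a)-\phi(x_t,b)\|_{\Lambda_t^{-1}}\}$; (4) observe $o_t$, set $w_t=\min\{1,\alpha/\|\phi_t\|_{\Sigma_t^{-1}}\}$; (5) set $\hat\Delta_t=|\phi_t^\top\theta_t|+\beta_t\|\phi_t\|_{\Sigma_t^{-1}}$ and $v_t=\max\{\kappa,\dot\sigma(\hat\Delta_t)\}$. *)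

theory Defs
  imports "HOL-Analysis.Analysis"
begin

definition sigmoid :: "real \<Rightarrow> real" where
  "sigmoid z = 1 / (1 + exp (- z))"

definition dsigmoid :: "real \<Rightarrow> real" where
  "dsigmoid z = exp (- z) / (1 + exp (- z))^2"

definition outer :: "real^'n \<Rightarrow> real^'n^'n" where
  "outer u = (\<chi> i j. u $ i * u $ j)"

definition mnorm :: "real^'n^'n \<Rightarrow> real^'n \<Rightarrow> real" where
  "mnorm M u = sqrt (u \<bullet> (M *v u))"

end

theory Submission
  imports Defs
begin



lemma outer_mv: "outer u *v y = (u \<bullet> y) *\<^sub>R u"
  by (simp add: outer_def matrix_vector_mult_def vec_eq_iff inner_vec_def sum_distrib_left mult_ac)

lemma form_mv:
  fixes u :: "nat \<Rightarrow> real^'d"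
  assumes "finite I"
  shows "(lam *\<^sub>R mat 1 + (\<Sum>i\<in>I. c i *\<^sub>R outer (u i))) *v z
         = lam *\<^sub>R z + (\<Sum>i\<in>I. (c i * (u i \<bullet> z)) *\<^sub>R u i)"
  using assms
proof (induction I rule: finite_induct)
  case empty
  then show ?case by (simp flip: scaleR_matrix_vector_assoc)
next
  case (insert j F)
  have "(lam *\<^sub>R mat 1 + (\<Sum>i\<in>insert j F. c i *\<^sub>R outer (u i))) *v z
     = (lam *\<^sub>R mat 1 + (\<Sum>i\<in>F. c i *\<^sub>R outer (u i))) *v z + (c j *\<^sub>R outer (u j)) *v z"
    using insert by (simp add: algebra_simps)
  also have "(c j *\<^sub>R outer (u j)) *v z = (c j * (u j \<bullet> z)) *\<^sub>R u j"
    by (simp flip: scaleR_matrix_vector_assoc add: outer_mv)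
  finally show ?case using insert by (simp add: algebra_simps)
qed

lemma form_inner:
  fixes u :: "nat \<Rightarrow> real^'d"
  assumes "finite I"
  shows "y \<bullet> ((lam *\<^sub>R mat 1 + (\<Sum>i\<in>I. c i *\<^sub>R outer (u i))) *v z)
         = lam * (y \<bullet> z) + (\<Sum>i\<in>I. c i * (u i \<bullet> z) * (u i \<bullet> y))"
  by (simp add: form_mv[OF assms] inner_add_right inner_sum_right inner_commute mult_ac)

lemma cs_form:
  fixes q :: "real^'d \<Rightarrow> real^'d \<Rightarrow> real"
  assumes bil: "\<And>p r s. q (p + s *\<^sub>R r) (p + s *\<^sub>R r) = q p p + 2 * s * q p r + s^2 * q r r"
    and psd: "\<And>p. q p p \<ge> 0"
  shows "(q y z)^2 \<le> q y y * q z z"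
proof (cases "q z z = 0")
  case True
  have "q y z = 0"
  proof (rule ccontr)
    assume h: "q y z \<noteq> 0"
    have "0 \<le> q (y + (-(q y y + 1) / (2 * q y z)) *\<^sub>R z) (y + (-(q y y + 1) / (2 * q y z)) *\<^sub>R z)" by (rule psd)
    also have "\<dots> = q y y + 2 * (-(q y y + 1) / (2 * q y z)) * q y z" using bil True by simp
    also have "\<dots> = -1" using h by (simp add: field_simps)
    finally show False by simp
  qed
  then show ?thesis using True by simp
next
  case False
  then have D: "q z z > 0" using psd[of z] by simp
  have "0 \<le> q (y + (- q y z / q z z) *\<^sub>R z) (y + (- q y z / q z z) *\<^sub>R z)" by (rule psd)
  also have "\<dots> = q y y + 2 * (- q y z / q z z) * q y z + (- q y z / q z z)^2 * q z z" by (rule bil)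
  also have "\<dots> = q y y - (q y z)^2 / q z z" using D by (simp add: field_simps power2_eq_square)
  finally have "(q y z)^2 / q z z \<le> q y y" by simp
  then show ?thesis using D by (simp add: field_simps)
qed

lemma mnorm_neg: "mnorm A (- p) = mnorm A p"
proof -
  have "A *v (- p) = - (A *v p)" using matrix_vector_mult_diff_distrib[of A 0 p] by simp
  then show ?thesis by (simp add: mnorm_def)
qed

lemma cs_main:
  fixes u :: "nat \<Rightarrow> real^'d"
  assumes fin: "finite I" and lam: "lam > 0" and cpos: "\<And>i. i \<in> I \<Longrightarrow> c i \<ge> 0"
    and M: "M = lam *\<^sub>R mat 1 + (\<Sum>i\<in>I. c i *\<^sub>R outer (u i))"
  shows "p \<bullet> z \<le> mnorm (matrix_inv M) p * mnorm M z \<and> mnorm (matrix_inv M) p \<ge> 0 \<and> mnorm M z \<ge> 0"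
proof -
  define q where "q y z = y \<bullet> (M *v z)" for y z :: "real^'d"
  have qf: "q y z = lam * (y \<bullet> z) + (\<Sum>i\<in>I. c i * (u i \<bullet> z) * (u i \<bullet> y))" for y z
    unfolding q_def M by (rule form_inner[OF fin])
  have sym: "q y z = q z y" for y z unfolding qf by (simp add: inner_commute mult_ac)
  have psd': "q y y \<ge> lam * (y \<bullet> y)" for y
    unfolding qf using cpos by (simp add: sum_nonneg mult.assoc)
  have psd: "q y y \<ge> 0" for y using psd'[of y] lam by (meson order_trans inner_ge_zero mult_nonneg_nonneg less_imp_le)
  have bil: "q (y + s *\<^sub>R r) (y + s *\<^sub>R r) = q y y + 2 * s * q y r + s^2 * q r r" for y r s
  proof -
    have "q (y + s *\<^sub>R r) (y + s *\<^sub>R r) = q y y + s * q y r + s * q r y + s^2 * q r r"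
      unfolding q_def by (simp add: algebra_simps inner_add_left inner_add_right power2_eq_square)
    then show ?thesis using sym[of r y] by simp
  qed
  have inj: "M *v y = 0 \<Longrightarrow> y = 0" for y
  proof -
    assume "M *v y = 0"
    then have "q y y = 0" by (simp add: q_def)
    then have "lam * (y \<bullet> y) \<le> 0" using psd'[of y] by simp
    then have "y \<bullet> y \<le> 0" using lam by (simp add: mult_le_0_iff)
    then show "y = 0" by (metis antisym inner_ge_zero inner_eq_zero_iff)
  qed
  have "invertible M"
    using inj matrix_left_invertible_ker invertible_left_inverse by blast
  then have MN: "M ** matrix_inv M = mat 1"
    unfolding invertible_def matrix_inv_def by (metis (mono_tags, lifting) someI_ex)
  define y where "y = matrix_inv M *v p"
  have My: "M *v y = p" unfolding y_def by (simp add: matrix_vector_mul_assoc MN)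
  have pz: "p \<bullet> z = q y z" using My sym[of z y] by (simp add: q_def inner_commute)
  have qyy: "q y y = p \<bullet> (matrix_inv M *v p)" using My by (simp add: q_def y_def inner_commute)
  have "(p \<bullet> z)^2 \<le> q y y * q z z" unfolding pz by (rule cs_form[of q, OF bil psd])
  then have "\<bar>p \<bullet> z\<bar> \<le> sqrt (q y y * q z z)" using real_le_rsqrt[of "\<bar>p \<bullet> z\<bar>"] by simp
  then have "p \<bullet> z \<le> mnorm (matrix_inv M) p * mnorm M z" unfolding mnorm_def qyy[symmetric] by (simp add: q_def real_sqrt_mult)
  moreover have "mnorm (matrix_inv M) p \<ge> 0" unfolding mnorm_def qyy[symmetric] using psd by simp
  moreover have "mnorm M z \<ge> 0" unfolding mnorm_def using psd[of z] by (simp add: q_def)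
  ultimately show ?thesis by simp
qed

lemma dsig_cosh: "dsigmoid z = 1 / (2 * cosh z + 2)"
proof -
  have e: "exp z * exp (-z) = 1" by (simp add: exp_minus)
  have "dsigmoid z = (exp (-z) * exp z) / ((1 + exp (-z))^2 * exp z)"
    unfolding dsigmoid_def by simp
  also have "(1 + exp (-z))^2 * exp z = exp z + 2 * (exp z * exp (-z)) + (exp z * exp (-z)) * exp (-z)"
    by (simp add: power2_eq_square algebra_simps)
  also have "\<dots> = exp z + 2 + exp (-z)" by (simp add: e)
  finally show ?thesis using e by (simp add: cosh_def mult.commute add_ac)
qed

lemma dsig_mono: "\<bar>z\<bar> \<le> s \<Longrightarrow> dsigmoid s \<le> dsigmoid z"
proof -
  assume h: "\<bar>z\<bar> \<le> s"
  have "cosh z = cosh \<bar>z\<bar>" by simp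
  also have "\<dots> \<le> cosh s" using h cosh_real_nonneg_le_iff[of "\<bar>z\<bar>" s] by simp
  finally have "cosh z \<le> cosh s" .
  moreover have "cosh z > 0" by (simp add: cosh_real_pos)
  ultimately show ?thesis unfolding dsig_cosh by (intro divide_left_mono mult_pos_pos) linarith+
qed


theorem mainTheorem8:
  fixes \<phi> :: "'x \<Rightarrow> 'a \<Rightarrow> real^'d"
    and \<theta>s :: "real^'d" and B \<kappa> \<alpha> lam :: real and T :: nat
    and x :: "nat \<Rightarrow> 'x" and a b astar :: "nat \<Rightarrow> 'a"
    and l c obs :: "nat \<Rightarrow> real"
    and \<theta> :: "nat \<Rightarrow> real^'d"
    and \<Sigma> \<Lambda> :: "nat \<Rightarrow> real^'d^'d"
    and w v \<beta> \<beta>t :: "nat \<Rightarrow> real"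
  assumes phi_bound: "\<And>x a. norm (\<phi> x a) \<le> 1"
    and theta_bound: "norm \<theta>s \<le> B"
    and kappa_pos: "\<kappa> > 0"
    and kappa_low: "\<And>x a b th. norm th \<le> B \<Longrightarrow>
                      dsigmoid ((\<phi> x a - \<phi> x b) \<bullet> th) \<ge> \<kappa>"
    and alpha_pos: "\<alpha> > 0" and lambda_pos: "lam > 0"
    and beta_pos: "\<And>t. \<beta> t > 0" and betat_pos: "\<And>t. \<beta>t t > 0"
    and astar: "\<And>t a'. t \<in> {1..T} \<Longrightarrow> \<theta>s \<bullet> \<phi> (x t) a' \<le> \<theta>s \<bullet> \<phi> (x t) (astar t)"
    and labels: "\<And>t. t \<in> {1..T} \<Longrightarrow> l t \<in> {0, 1}"
    and corrupt: "\<And>t. t \<in> {1..T} \<Longrightarrow> c t \<in> {0, 1}"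
    and obs: "\<And>t. t \<in> {1..T} \<Longrightarrow> obs t = (if c t = 0 then l t else 1 - l t)"
    and Sigma_def: "\<And>t. t \<in> {1..T} \<Longrightarrow> \<Sigma> t = lam *\<^sub>R mat 1 +
          (\<Sum>i\<in>{1..<t}. (w i * \<kappa>) *\<^sub>R outer (\<phi> (x i) (a i) - \<phi> (x i) (b i)))"
    and Lambda_def: "\<And>t. t \<in> {1..T} \<Longrightarrow> \<Lambda> t = lam *\<^sub>R mat 1 +
          (\<Sum>i\<in>{1..<t}. (w i * v i) *\<^sub>R outer (\<phi> (x i) (a i) - \<phi> (x i) (b i)))"
    and theta_solves: "\<And>t. t \<in> {1..T} \<Longrightarrow> lam *\<^sub>R \<theta> t +
          (\<Sum>i\<in>{1..<t}. (w i * (sigmoid ((\<phi> (x i) (a i) - \<phi> (x i) (b i)) \<bullet> \<theta> t) - obs i))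
              *\<^sub>R (\<phi> (x i) (a i) - \<phi> (x i) (b i))) = 0"
    and choice: "\<And>t a' b'. t \<in> {1..T} \<Longrightarrow>
          (\<phi> (x t) a' + \<phi> (x t) b') \<bullet> \<theta> t
            + \<beta>t t * mnorm (matrix_inv (\<Lambda> t)) (\<phi> (x t) a' - \<phi> (x t) b')
          \<le> (\<phi> (x t) (a t) + \<phi> (x t) (b t)) \<bullet> \<theta> t
            + \<beta>t t * mnorm (matrix_inv (\<Lambda> t)) (\<phi> (x t) (a t) - \<phi> (x t) (b t))"
    and w_def: "\<And>t. t \<in> {1..T} \<Longrightarrow> w t =
          (let n = mnorm (matrix_inv (\<Sigma> t)) (\<phi> (x t) (a t) - \<phi> (x t) (b t))
           in if n = 0 then 1 else min 1 (\<alpha> / n))"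
    and v_def: "\<And>t. t \<in> {1..T} \<Longrightarrow> v t = max \<kappa> (dsigmoid
          (\<bar>(\<phi> (x t) (a t) - \<phi> (x t) (b t)) \<bullet> \<theta> t\<bar>
           + \<beta> t * mnorm (matrix_inv (\<Sigma> t)) (\<phi> (x t) (a t) - \<phi> (x t) (b t))))"
    and E1: "\<And>t. t \<in> {1..T} \<Longrightarrow> mnorm (\<Sigma> t) (\<theta>s - \<theta> t) \<le> \<beta> t"
    and E2: "\<And>t. t \<in> {1..T} \<Longrightarrow> mnorm (\<Lambda> t) (\<theta>s - \<theta> t) \<le> \<beta>t t"
  shows "\<forall>t\<in>{1..T}.
           v t \<le> dsigmoid ((\<phi> (x t) (a t) - \<phi> (x t) (b t)) \<bullet> \<theta>s)
         \<and> 2 * (\<theta>s \<bullet> \<phi> (x t) (astar t)) - \<theta>s \<bullet> \<phi> (x t) (a t) - \<theta>s \<bullet> \<phi> (x t) (b t)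
             \<le> 2 * \<beta>t t * mnorm (matrix_inv (\<Lambda> t)) (\<phi> (x t) (a t) - \<phi> (x t) (b t))"
  proof -
  have wnn: "i \<in> {1..T} \<longrightarrow> w i \<ge> 0" for i
  proof (induction i rule: less_induct)
    case (less i)
    show ?case
    proof
      assume i: "i \<in> {1..T}"
      have cp: "\<And>j. j \<in> {1..<i} \<Longrightarrow> w j * \<kappa> \<ge> 0"
        using less i kappa_pos by auto
      have "mnorm (matrix_inv (\<Sigma> i)) (\<phi> (x i) (a i) - \<phi> (x i) (b i)) \<ge> 0"
        using cs_main[OF finite_atLeastLessThan lambda_pos cp Sigma_def[OF i]] by blast
      then show "w i \<ge> 0" using w_def[OF i] alpha_pos by (auto simp: Let_def)
    qed
  qed
  show ?thesis
  proof
    fix t assume t: "t \<in> {1..T}"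
    define u where "u = \<phi> (x t) (a t) - \<phi> (x t) (b t)"
    have cS: "\<And>j. j \<in> {1..<t} \<Longrightarrow> w j * \<kappa> \<ge> 0"
      using wnn t kappa_pos by auto
    have cL: "\<And>j. j \<in> {1..<t} \<Longrightarrow> w j * v j \<ge> 0"
    proof -
      fix j assume j: "j \<in> {1..<t}"
      then have jT: "j \<in> {1..T}" using t by auto
      have "v j \<ge> \<kappa>" using v_def[OF jT] by simp
      then show "w j * v j \<ge> 0" using wnn jT kappa_pos by auto
    qed
    note CSS = cs_main[OF finite_atLeastLessThan lambda_pos cS Sigma_def[OF t]]
    note CSL = cs_main[OF finite_atLeastLessThan lambda_pos cL Lambda_def[OF t]]
    define d where "d = \<theta>s - \<theta> t"
    have m1: "u \<bullet> d \<le> mnorm (matrix_inv (\<Sigma> t)) u * \<beta> t"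
    proof -
      have h: "u \<bullet> d \<le> mnorm (matrix_inv (\<Sigma> t)) u * mnorm (\<Sigma> t) d"
        and n: "mnorm (matrix_inv (\<Sigma> t)) u \<ge> 0" using CSS by blast+
      have "mnorm (matrix_inv (\<Sigma> t)) u * mnorm (\<Sigma> t) d \<le> mnorm (matrix_inv (\<Sigma> t)) u * \<beta> t"
        using E1[OF t] n unfolding d_def by (intro mult_left_mono) auto
      then show ?thesis using h by linarith
    qed
    have m2: "(-u) \<bullet> d \<le> mnorm (matrix_inv (\<Sigma> t)) u * \<beta> t"
    proof -
      have h: "(-u) \<bullet> d \<le> mnorm (matrix_inv (\<Sigma> t)) (-u) * mnorm (\<Sigma> t) d"
        and n: "mnorm (matrix_inv (\<Sigma> t)) u \<ge> 0" using CSS by blast+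
      have "mnorm (matrix_inv (\<Sigma> t)) u * mnorm (\<Sigma> t) d \<le> mnorm (matrix_inv (\<Sigma> t)) u * \<beta> t"
        using E1[OF t] n unfolding d_def by (intro mult_left_mono) auto
      then show ?thesis using h by (simp add: mnorm_neg)
    qed
    have "u \<bullet> \<theta>s = u \<bullet> \<theta> t + u \<bullet> d" unfolding d_def by (simp add: inner_diff_right)
    then have abs: "\<bar>u \<bullet> \<theta>s\<bar> \<le> \<bar>u \<bullet> \<theta> t\<bar> + \<beta> t * mnorm (matrix_inv (\<Sigma> t)) u"
      using m1 m2 by (auto simp: abs_le_iff mult.commute)
    have k: "\<kappa> \<le> dsigmoid (u \<bullet> \<theta>s)" unfolding u_def by (rule kappa_low[OF theta_bound])
    have "dsigmoid (\<bar>u \<bullet> \<theta> t\<bar> + \<beta> t * mnorm (matrix_inv (\<Sigma> t)) u) \<le> dsigmoid (u \<bullet> \<theta>s)"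
      by (rule dsig_mono[OF abs])
    then have P1: "v t \<le> dsigmoid (u \<bullet> \<theta>s)" using k v_def[OF t] unfolding u_def by simp
    define L where "L = matrix_inv (\<Lambda> t)"
    define fs fa fb where "fs = \<phi> (x t) (astar t)" and "fa = \<phi> (x t) (a t)" and "fb = \<phi> (x t) (b t)"
    have C1: "(fs + fb) \<bullet> \<theta> t + \<beta>t t * mnorm L (fs - fb) \<le> (fa + fb) \<bullet> \<theta> t + \<beta>t t * mnorm L (fa - fb)"
      using choice[OF t, of "astar t" "b t"] unfolding L_def fs_def fa_def fb_def .
    have C2: "(fa + fs) \<bullet> \<theta> t + \<beta>t t * mnorm L (fa - fs) \<le> (fa + fb) \<bullet> \<theta> t + \<beta>t t * mnorm L (fa - fb)"
      using choice[OF t, of "a t" "astar t"] unfolding L_def fs_def fa_def fb_def .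
    have neg: "mnorm L (fa - fs) = mnorm L (fs - fa)"
      using mnorm_neg[of L "fs - fa"] by simp
    have D: "(p::real^'d) \<bullet> d \<le> mnorm L p * \<beta>t t" for p
    proof -
      have h: "p \<bullet> d \<le> mnorm L p * mnorm (\<Lambda> t) d"
        and n: "mnorm L p \<ge> 0" using CSL unfolding L_def by blast+
      have "mnorm L p * mnorm (\<Lambda> t) d \<le> mnorm L p * \<beta>t t"
        using E2[OF t] n unfolding d_def by (intro mult_left_mono) auto
      then show ?thesis using h by linarith
    qed
    have Da: "(fs - fa) \<bullet> d \<le> mnorm L (fs - fa) * \<beta>t t" by (rule D)
    have Db: "(fs - fb) \<bullet> d \<le> mnorm L (fs - fb) * \<beta>t t" by (rule D)
    have e1: "(fs - fa) \<bullet> d = \<theta>s \<bullet> fs - \<theta>s \<bullet> fa - (fs \<bullet> \<theta> t - fa \<bullet> \<theta> t)"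
      unfolding d_def by (simp add: inner_diff_left inner_diff_right inner_commute)
    have e2: "(fs - fb) \<bullet> d = \<theta>s \<bullet> fs - \<theta>s \<bullet> fb - (fs \<bullet> \<theta> t - fb \<bullet> \<theta> t)"
      unfolding d_def by (simp add: inner_diff_left inner_diff_right inner_commute)
    have e3: "(fs + fb) \<bullet> \<theta> t = fs \<bullet> \<theta> t + fb \<bullet> \<theta> t"
      "(fa + fb) \<bullet> \<theta> t = fa \<bullet> \<theta> t + fb \<bullet> \<theta> t"
      "(fa + fs) \<bullet> \<theta> t = fa \<bullet> \<theta> t + fs \<bullet> \<theta> t" by (simp_all add: inner_add_left)
    have P2: "2 * (\<theta>s \<bullet> fs) - \<theta>s \<bullet> fa - \<theta>s \<bullet> fb \<le> 2 * \<beta>t t * mnorm L (fa - fb)"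
      using C1 C2 neg Da Db e1 e2 e3 by (simp add: algebra_simps)
    show "v t \<le> dsigmoid ((\<phi> (x t) (a t) - \<phi> (x t) (b t)) \<bullet> \<theta>s)
         \<and> 2 * (\<theta>s \<bullet> \<phi> (x t) (astar t)) - \<theta>s \<bullet> \<phi> (x t) (a t) - \<theta>s \<bullet> \<phi> (x t) (b t)
             \<le> 2 * \<beta>t t * mnorm (matrix_inv (\<Lambda> t)) (\<phi> (x t) (a t) - \<phi> (x t) (b t))"
      using P1 P2 unfolding u_def L_def fs_def fa_def fb_def by simp
  qed
qed

end
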